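(* Let $(S,H)$ be a Brill–Noether general K3 surface of degree $10$ ($H$ very ample, $H^2=10$), and let $(\omega,\beta)$ range over pairs of classes in $\mathrm{NS}(S)_{\mathbb Q}$ with $\omega$ ample. Then the equation $$Z_{\omega,\beta}(r,\Delta,s)=Z_{\omega,\beta}(-4r-5s-2\Delta\cdot H,\ (2r+2s+\Delta\cdot H)H-\Delta,\ -5r-4s-2\Delta\cdot H)$$ holds for all $(r,\Delta,s)\in N(S)$ if and only if $\omega=\tfrac15H$ and $\beta=-\tfrac25H$; and the equation $$Z_{\omega,\beta}(r,\Delta,s)=Z_{\omega,\beta}(-9r-5s-3\Delta\cdot H,\ (6r+3s+2\Delta\cdot H)H-\Delta,\ -20r-9s-6\Delta\cdot H)$$ holds for all $(r,\Delta,s)\in N(S)$ if and only if $\omega=\tfrac15H$ and $\beta=-\tfrac35H$.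
   Context: $N(S)=H^0(S,\mathbb Z)\oplus\mathrm{NS}(S)\oplus H^4(S,\mathbb Z)$ with elements $(r,\Delta,s)$, and $Z_{\omega,\beta}(r,\Delta,s)=\tfrac12(2\beta\cdot\Delta-2s+r(\omega^2-\beta^2))+\sqrt{-1}(\Delta-r\beta)\cdot\omega$. *)

theory Defs
  imports "HOL-Analysis.Analysis"
begin

text \<open>NS(S) is modelled as the lattice int^'n with an integral Gram matrix G;
  NS(S)_Q is rat^'n with the same form.\<close>

definition ratv :: "int^'n \<Rightarrow> rat^'n" where
  "ratv x = (\<chi> i. of_int (x $ i))"

definition ibil :: "int^'n^'n \<Rightarrow> int^'n \<Rightarrow> int^'n \<Rightarrow> int" where
  "ibil G x y = (\<Sum>i\<in>UNIV. \<Sum>j\<in>UNIV. x $ i * G $ i $ j * y $ j)"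

definition qbil :: "int^'n^'n \<Rightarrow> rat^'n \<Rightarrow> rat^'n \<Rightarrow> rat" where
  "qbil G x y = (\<Sum>i\<in>UNIV. \<Sum>j\<in>UNIV. x $ i * of_int (G $ i $ j) * y $ j)"

definition Zc :: "int^'n^'n \<Rightarrow> rat^'n \<Rightarrow> rat^'n \<Rightarrow> int \<Rightarrow> int^'n \<Rightarrow> int \<Rightarrow> complex" where
  "Zc G \<omega> \<beta> r \<Delta> s =
     Complex (real_of_rat ((1/2) * (2 * qbil G \<beta> (ratv \<Delta>) - 2 * of_int s
                 + of_int r * (qbil G \<omega> \<omega> - qbil G \<beta> \<beta>))))
             (real_of_rat (qbil G (ratv \<Delta> - of_int r *s \<beta>) \<omega>))"

end

theory Submission imports Defs begin

lemma qbil_ladd: "qbil G (x + y) z = qbil G x z + qbil G y z"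
  by (simp add: qbil_def algebra_simps sum.distrib)
lemma qbil_lsub: "qbil G (x - y) z = qbil G x z - qbil G y z"
  by (simp add: qbil_def algebra_simps sum_subtractf)
lemma qbil_lscale: "qbil G (c *s x) z = c * qbil G x z"
  by (simp add: qbil_def sum_distrib_left algebra_simps)
lemma qbil_radd: "qbil G z (x + y) = qbil G z x + qbil G z y"
  by (simp add: qbil_def algebra_simps sum.distrib)
lemma qbil_rsub: "qbil G z (x - y) = qbil G z x - qbil G z y"
  by (simp add: qbil_def algebra_simps sum_subtractf)
lemma qbil_rscale: "qbil G z (c *s x) = c * qbil G z x"
  by (simp add: qbil_def sum_distrib_left algebra_simps)
lemma qbil_lneg: "qbil G (- x) z = - qbil G x z"
  by (simp add: qbil_def sum_negf)
lemma qbil_rneg: "qbil G z (- x) = - qbil G z x"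
  by (simp add: qbil_def sum_negf)
lemma ratv_add: "ratv (x + y) = ratv x + ratv y" by (simp add: ratv_def vec_eq_iff)
lemma qbil_l0: "qbil G 0 z = 0" by (simp add: qbil_def)
lemma qbil_r0: "qbil G z 0 = 0" by (simp add: qbil_def)
lemma qbil_sym: assumes "\<forall>i j. G $ i $ j = G $ j $ i" shows "qbil G x y = qbil G y x"
  unfolding qbil_def using assms
  by (subst sum.swap) (simp add: algebra_simps)
lemma ratv_sub: "ratv (x - y) = ratv x - ratv y" by (simp add: ratv_def vec_eq_iff)
lemma ratv_scale: "ratv (a *s x) = of_int a *s ratv x" by (simp add: ratv_def vec_eq_iff)
lemma ratv_0: "ratv 0 = 0" by (simp add: ratv_def vec_eq_iff)
lemma ibil_qbil: "of_int (ibil G x y) = qbil G (ratv x) (ratv y)"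
  by (simp add: ibil_def qbil_def ratv_def)

lemma det_of_int: "det (\<chi> i j. (of_int (G $ i $ j) :: rat)) = of_int (det G)"
  by (simp add: det_def of_int_sum of_int_mult of_int_prod)

lemma nondeg_lem:
  assumes sym: "\<forall>i j. G $ i $ j = G $ j $ i" and nd: "det G \<noteq> 0"
    and h: "\<forall>\<Delta>. qbil G v (ratv \<Delta>) = 0"
  shows "v = 0"
proof -
  define M where "M = (\<chi> i j. (of_int (G $ i $ j) :: rat))"
  have "det M \<noteq> 0" using nd by (simp add: M_def det_of_int)
  then have "invertible M" by (simp add: invertible_det_nz)
  then obtain B where B: "B ** M = mat 1" unfolding invertible_def by blast
  have Mv: "M *v v = 0"
  proof -
    have "(M *v v) $ j = 0" for j
    proof -
      have "qbil G v (ratv (axis j 1)) = 0" using h by blast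
      moreover have "qbil G v (ratv (axis j 1)) = (\<Sum>i\<in>UNIV. v $ i * of_int (G $ i $ j))"
        unfolding qbil_def ratv_def axis_def
        by (simp add: if_distrib cong: if_cong)
      moreover have "(M *v v) $ j = (\<Sum>i\<in>UNIV. v $ i * of_int (G $ i $ j))"
        using sym by (simp add: M_def matrix_vector_mult_def mult.commute)
      ultimately show ?thesis by simp
    qed
    then show ?thesis by (simp add: vec_eq_iff)
  qed
  have "v = B *v (M *v v)" by (simp add: matrix_vector_mul_assoc B)
  then show ?thesis using Mv by simp
qed

definition reZ :: "int^'n^'n \<Rightarrow> rat^'n \<Rightarrow> rat^'n \<Rightarrow> int \<Rightarrow> int^'n \<Rightarrow> int \<Rightarrow> rat" where "reZ G \<omega> \<beta> r \<Delta> s = (1/2) * (2 * qbil G \<beta> (ratv \<Delta>) - 2 * of_int s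
                 + of_int r * (qbil G \<omega> \<omega> - qbil G \<beta> \<beta>))"
definition imZ :: "int^'n^'n \<Rightarrow> rat^'n \<Rightarrow> rat^'n \<Rightarrow> int \<Rightarrow> int^'n \<Rightarrow> int \<Rightarrow> rat" where "imZ G \<omega> \<beta> r \<Delta> s = qbil G (ratv \<Delta>) \<omega> - of_int r * qbil G \<beta> \<omega>"

lemma Zc_eq: "(Zc G \<omega> \<beta> r \<Delta> s = Zc G \<omega> \<beta> r' \<Delta>' s') \<longleftrightarrow>
   reZ G \<omega> \<beta> r \<Delta> s = reZ G \<omega> \<beta> r' \<Delta>' s' \<and> imZ G \<omega> \<beta> r \<Delta> s = imZ G \<omega> \<beta> r' \<Delta>' s'"
  unfolding Zc_def reZ_def imZ_def complex.inject of_rat_eq_iff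
  by (simp add: qbil_lsub qbil_lscale)

lemmas qsimps = qbil_ladd qbil_lsub qbil_lscale qbil_radd qbil_rsub qbil_rscale qbil_l0 qbil_r0 qbil_lneg qbil_rneg ratv_add
   ratv_sub ratv_scale ratv_0 reZ_def imZ_def

lemma part1:
  fixes G :: "int^'n^'n" and H :: "int^'n" and \<omega> \<beta> :: "rat^'n"
  assumes sym: "\<forall>i j. G $ i $ j = G $ j $ i"
    and nondeg: "det G \<noteq> 0"
    and H2: "ibil G H H = 10"
    and pos: "qbil G (ratv H) \<omega> > 0"
  shows "(\<forall>r \<Delta> s. Zc G \<omega> \<beta> r \<Delta> s =
            Zc G \<omega> \<beta> (-4 * r - 5 * s - 2 * ibil G \<Delta> H)
                        ((2 * r + 2 * s + ibil G \<Delta> H) *s H - \<Delta>)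
                        (-5 * r - 4 * s - 2 * ibil G \<Delta> H))
         \<longleftrightarrow> (\<omega> = (1/5) *s ratv H \<and> \<beta> = (-2/5) *s ratv H)"
proof -
  let ?h = "ratv H"
  have hh: "qbil G ?h ?h = 10" using ibil_qbil[of G H H] H2 by simp
  have D: "of_int (ibil G \<Delta> H) = qbil G (ratv \<Delta>) ?h" for \<Delta> by (simp add: ibil_qbil)
  have S: "qbil G x y = qbil G y x" for x y using qbil_sym[OF sym] .
  show ?thesis
  proof
    assume P: "\<forall>r \<Delta> s. Zc G \<omega> \<beta> r \<Delta> s =
            Zc G \<omega> \<beta> (-4 * r - 5 * s - 2 * ibil G \<Delta> H)
                        ((2 * r + 2 * s + ibil G \<Delta> H) *s H - \<Delta>)
                        (-5 * r - 4 * s - 2 * ibil G \<Delta> H)"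
    define k where "k = qbil G ?h \<omega> + 2 * qbil G \<beta> \<omega>"
    have "\<forall>\<Delta>. qbil G (2 *s \<omega> - k *s ?h) (ratv \<Delta>) = 0"
    proof
      fix \<Delta>
      have "imZ G \<omega> \<beta> 0 \<Delta> 0 = imZ G \<omega> \<beta> (-4 * 0 - 5 * 0 - 2 * ibil G \<Delta> H) ((2 * 0 + 2 * 0 + ibil G \<Delta> H) *s H - \<Delta>) (-5 * 0 - 4 * 0 - 2 * ibil G \<Delta> H)"
        using P[rule_format, of 0 \<Delta> 0] unfolding Zc_eq by blast
      then show "qbil G (2 *s \<omega> - k *s ?h) (ratv \<Delta>) = 0"
        by (simp add: qsimps D k_def S[of \<omega> "ratv \<Delta>"] S[of ?h "ratv \<Delta>"])
    qed
    then have "2 *s \<omega> - k *s ?h = 0" using nondeg_lem[OF sym nondeg] by blast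
    then have om: "\<omega> = (k/2) *s ?h" by (simp add: vec_eq_iff field_simps)
    define m where "m = qbil G \<beta> ?h + 2 - (qbil G \<omega> \<omega> - qbil G \<beta> \<beta>)"
    have "\<forall>\<Delta>. qbil G (2 *s \<beta> - m *s ?h) (ratv \<Delta>) = 0"
    proof
      fix \<Delta>
      have "reZ G \<omega> \<beta> 0 \<Delta> 0 = reZ G \<omega> \<beta> (-4 * 0 - 5 * 0 - 2 * ibil G \<Delta> H) ((2 * 0 + 2 * 0 + ibil G \<Delta> H) *s H - \<Delta>) (-5 * 0 - 4 * 0 - 2 * ibil G \<Delta> H)"
        using P[rule_format, of 0 \<Delta> 0] unfolding Zc_eq by blast
      then show "qbil G (2 *s \<beta> - m *s ?h) (ratv \<Delta>) = 0"
        apply (simp add: qsimps D m_def S[of \<beta> "ratv \<Delta>"] S[of ?h "ratv \<Delta>"])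
        apply (simp add: algebra_simps)
        done
    qed
    then have "2 *s \<beta> - m *s ?h = 0" using nondeg_lem[OF sym nondeg] by blast
    then have be: "\<beta> = (m/2) *s ?h" by (simp add: vec_eq_iff field_simps)
    define c where "c = k/2"
    define b where "b = m/2"
    have om': "\<omega> = c *s ?h" and be': "\<beta> = b *s ?h" using om be c_def b_def by auto
    have P1: "Zc G \<omega> \<beta> 1 0 0 = Zc G \<omega> \<beta> (-4) (2 *s H) (-5)"
      using P[rule_format, of 1 0 0] by (simp add: ibil_def)
    then have e1: "- (b * c * 10) = 2 * (c * 10) + 4 * (b * c * 10)"
      and e2: "(1/2) * (c*c*10 - b*b*10) = (1/2) * (4 * (b * 10) + 10 - 4 * (c*c*10 - b*b*10))"
    proof -
      have i: "imZ G \<omega> \<beta> 1 0 0 = imZ G \<omega> \<beta> (-4) (2 *s H) (-5)"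
       and r: "reZ G \<omega> \<beta> 1 0 0 = reZ G \<omega> \<beta> (-4) (2 *s H) (-5)" using P1 Zc_eq by blast+
      from i show "- (b * c * 10) = 2 * (c * 10) + 4 * (b * c * 10)"
        by (simp add: qsimps om' be' hh)
      from r show "(1/2) * (c*c*10 - b*b*10) = (1/2) * (4 * (b * 10) + 10 - 4 * (c*c*10 - b*b*10))"
        by (simp add: qsimps om' be' hh)
    qed
    have cpos: "c > 0" using pos hh by (simp add: om' qsimps)
    have "c * (50*b + 20) = 0" using e1 by (simp add: algebra_simps)
    then have "50*b + 20 = 0" using cpos by simp
    then have bb: "b = -2/5" by simp
    have "c * c = 1/25" using e2 bb by (simp add: algebra_simps)
    then have "(c - 1/5) * (c + 1/5) = 0" by (simp add: algebra_simps)
    then have "c = 1/5" using cpos by auto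
    then show "\<omega> = (1/5) *s ratv H \<and> \<beta> = (-2/5) *s ratv H" using om' be' bb by simp
  next
    assume A: "\<omega> = (1/5) *s ratv H \<and> \<beta> = (-2/5) *s ratv H"
    show "\<forall>r \<Delta> s. Zc G \<omega> \<beta> r \<Delta> s =
            Zc G \<omega> \<beta> (-4 * r - 5 * s - 2 * ibil G \<Delta> H)
                        ((2 * r + 2 * s + ibil G \<Delta> H) *s H - \<Delta>)
                        (-5 * r - 4 * s - 2 * ibil G \<Delta> H)"
    proof (intro allI)
      fix r s \<Delta>
      show "Zc G \<omega> \<beta> r \<Delta> s =
            Zc G \<omega> \<beta> (-4 * r - 5 * s - 2 * ibil G \<Delta> H)
                        ((2 * r + 2 * s + ibil G \<Delta> H) *s H - \<Delta>)
                        (-5 * r - 4 * s - 2 * ibil G \<Delta> H)"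
        unfolding Zc_eq using A
        apply (elim conjE)
        apply (simp add: qsimps hh D S[of ?h "ratv \<Delta>"])
        apply (simp add: field_simps)
        done
    qed
  qed
qed
lemma part2:
  fixes G :: "int^'n^'n" and H :: "int^'n" and \<omega> \<beta> :: "rat^'n"
  assumes sym: "\<forall>i j. G $ i $ j = G $ j $ i"
    and nondeg: "det G \<noteq> 0"
    and H2: "ibil G H H = 10"
    and pos: "qbil G (ratv H) \<omega> > 0"
  shows "(\<forall>r \<Delta> s. Zc G \<omega> \<beta> r \<Delta> s =
            Zc G \<omega> \<beta> (-9 * r - 5 * s - 3 * ibil G \<Delta> H)
                        ((6 * r + 3 * s + 2 * ibil G \<Delta> H) *s H - \<Delta>)
                        (-20 * r - 9 * s - 6 * ibil G \<Delta> H))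
         \<longleftrightarrow> (\<omega> = (1/5) *s ratv H \<and> \<beta> = (-3/5) *s ratv H)"
proof -
  let ?h = "ratv H"
  have hh: "qbil G ?h ?h = 10" using ibil_qbil[of G H H] H2 by simp
  have D: "of_int (ibil G \<Delta> H) = qbil G (ratv \<Delta>) ?h" for \<Delta> by (simp add: ibil_qbil)
  have S: "qbil G x y = qbil G y x" for x y using qbil_sym[OF sym] .
  show ?thesis
  proof
    assume P: "\<forall>r \<Delta> s. Zc G \<omega> \<beta> r \<Delta> s =
            Zc G \<omega> \<beta> (-9 * r - 5 * s - 3 * ibil G \<Delta> H)
                        ((6 * r + 3 * s + 2 * ibil G \<Delta> H) *s H - \<Delta>)
                        (-20 * r - 9 * s - 6 * ibil G \<Delta> H)"
    define k where "k = 2 * qbil G ?h \<omega> + 3 * qbil G \<beta> \<omega>"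
    have "\<forall>\<Delta>. qbil G (2 *s \<omega> - k *s ?h) (ratv \<Delta>) = 0"
    proof
      fix \<Delta>
      have "imZ G \<omega> \<beta> 0 \<Delta> 0 = imZ G \<omega> \<beta> (-9 * 0 - 5 * 0 - 3 * ibil G \<Delta> H) ((6 * 0 + 3 * 0 + 2 * ibil G \<Delta> H) *s H - \<Delta>) (-20 * 0 - 9 * 0 - 6 * ibil G \<Delta> H)"
        using P[rule_format, of 0 \<Delta> 0] unfolding Zc_eq by blast
      then show "qbil G (2 *s \<omega> - k *s ?h) (ratv \<Delta>) = 0"
        by (simp add: qsimps D k_def S[of \<omega> "ratv \<Delta>"] S[of ?h "ratv \<Delta>"])
    qed
    then have "2 *s \<omega> - k *s ?h = 0" using nondeg_lem[OF sym nondeg] by blast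
    then have om: "\<omega> = (k/2) *s ?h" by (simp add: vec_eq_iff field_simps)
    define m where "m = 2 * qbil G \<beta> ?h + 6 - 3 * (qbil G \<omega> \<omega> - qbil G \<beta> \<beta>) / 2"
    have "\<forall>\<Delta>. qbil G (2 *s \<beta> - m *s ?h) (ratv \<Delta>) = 0"
    proof
      fix \<Delta>
      have "reZ G \<omega> \<beta> 0 \<Delta> 0 = reZ G \<omega> \<beta> (-9 * 0 - 5 * 0 - 3 * ibil G \<Delta> H) ((6 * 0 + 3 * 0 + 2 * ibil G \<Delta> H) *s H - \<Delta>) (-20 * 0 - 9 * 0 - 6 * ibil G \<Delta> H)"
        using P[rule_format, of 0 \<Delta> 0] unfolding Zc_eq by blast
      then show "qbil G (2 *s \<beta> - m *s ?h) (ratv \<Delta>) = 0"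
        apply (simp add: qsimps D m_def S[of \<beta> "ratv \<Delta>"] S[of ?h "ratv \<Delta>"])
        apply (simp add: field_simps)
        done
    qed
    then have "2 *s \<beta> - m *s ?h = 0" using nondeg_lem[OF sym nondeg] by blast
    then have be: "\<beta> = (m/2) *s ?h" by (simp add: vec_eq_iff field_simps)
    define c where "c = k/2"
    define b where "b = m/2"
    have om': "\<omega> = c *s ?h" and be': "\<beta> = b *s ?h" using om be c_def b_def by auto
    have P1: "Zc G \<omega> \<beta> 1 0 0 = Zc G \<omega> \<beta> (-9) (6 *s H) (-20)"
      using P[rule_format, of 1 0 0] by (simp add: ibil_def)
    then have e1: "- (b * c * 10) = 6 * (c * 10) + 9 * (b * c * 10)"
      and e2: "(1/2) * (c*c*10 - b*b*10) = (1/2) * (12 * (b * 10) + 40 - 9 * (c*c*10 - b*b*10))"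
    proof -
      have i: "imZ G \<omega> \<beta> 1 0 0 = imZ G \<omega> \<beta> (-9) (6 *s H) (-20)"
       and r: "reZ G \<omega> \<beta> 1 0 0 = reZ G \<omega> \<beta> (-9) (6 *s H) (-20)" using P1 Zc_eq by blast+
      from i show "- (b * c * 10) = 6 * (c * 10) + 9 * (b * c * 10)"
        by (simp add: qsimps om' be' hh)
      from r show "(1/2) * (c*c*10 - b*b*10) = (1/2) * (12 * (b * 10) + 40 - 9 * (c*c*10 - b*b*10))"
        by (simp add: qsimps om' be' hh)
    qed
    have cpos: "c > 0" using pos hh by (simp add: om' qsimps)
    have "c * (100*b + 60) = 0" using e1 by (simp add: algebra_simps)
    then have "100*b + 60 = 0" using cpos by simp
    then have bb: "b = -3/5" by simp
    have "c * c = 1/25" using e2 bb by (simp add: algebra_simps)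
    then have "(c - 1/5) * (c + 1/5) = 0" by (simp add: algebra_simps)
    then have "c = 1/5" using cpos by auto
    then show "\<omega> = (1/5) *s ratv H \<and> \<beta> = (-3/5) *s ratv H" using om' be' bb by simp
  next
    assume A: "\<omega> = (1/5) *s ratv H \<and> \<beta> = (-3/5) *s ratv H"
    show "\<forall>r \<Delta> s. Zc G \<omega> \<beta> r \<Delta> s =
            Zc G \<omega> \<beta> (-9 * r - 5 * s - 3 * ibil G \<Delta> H)
                        ((6 * r + 3 * s + 2 * ibil G \<Delta> H) *s H - \<Delta>)
                        (-20 * r - 9 * s - 6 * ibil G \<Delta> H)"
    proof (intro allI)
      fix r s \<Delta>
      show "Zc G \<omega> \<beta> r \<Delta> s =
            Zc G \<omega> \<beta> (-9 * r - 5 * s - 3 * ibil G \<Delta> H)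
                        ((6 * r + 3 * s + 2 * ibil G \<Delta> H) *s H - \<Delta>)
                        (-20 * r - 9 * s - 6 * ibil G \<Delta> H)"
        unfolding Zc_eq using A
        apply (elim conjE)
        apply (simp add: qsimps hh D S[of ?h "ratv \<Delta>"])
        apply (simp add: field_simps)
        done
    qed
  qed
qed

theorem proposition6p2:
  fixes G :: "int^'n^'n" and H :: "int^'n" and ample :: "rat^'n \<Rightarrow> bool"
    and \<omega> \<beta> :: "rat^'n"
  assumes sym: "\<forall>i j. G $ i $ j = G $ j $ i"
    and even_form: "\<forall>i. even (G $ i $ i)"
    and nondeg: "det G \<noteq> 0"
    and H2: "ibil G H H = 10"
    and hodge: "\<forall>y. ibil G H y = 0 \<longrightarrow> y \<noteq> 0 \<longrightarrow> ibil G y y < 0"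
    and H_ample: "ample (ratv H)"
    and ample_pos: "\<forall>x y. ample x \<longrightarrow> ample y \<longrightarrow> qbil G x y > 0"
    and \<omega>_ample: "ample \<omega>"
  shows "((\<forall>r \<Delta> s. Zc G \<omega> \<beta> r \<Delta> s =
            Zc G \<omega> \<beta> (-4 * r - 5 * s - 2 * ibil G \<Delta> H)
                        ((2 * r + 2 * s + ibil G \<Delta> H) *s H - \<Delta>)
                        (-5 * r - 4 * s - 2 * ibil G \<Delta> H))
         \<longleftrightarrow> (\<omega> = (1/5) *s ratv H \<and> \<beta> = (-2/5) *s ratv H))
       \<and> ((\<forall>r \<Delta> s. Zc G \<omega> \<beta> r \<Delta> s =
            Zc G \<omega> \<beta> (-9 * r - 5 * s - 3 * ibil G \<Delta> H)
                        ((6 * r + 3 * s + 2 * ibil G \<Delta> H) *s H - \<Delta>)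
                        (-20 * r - 9 * s - 6 * ibil G \<Delta> H))
         \<longleftrightarrow> (\<omega> = (1/5) *s ratv H \<and> \<beta> = (-3/5) *s ratv H))"
proof -
  have pos: "qbil G (ratv H) \<omega> > 0" using ample_pos H_ample \<omega>_ample by blast
  show ?thesis using part1[OF sym nondeg H2 pos] part2[OF sym nondeg H2 pos] by blast
qed

end
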